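(* Let $\bm{T} = \{T^1,\ldots,T^M\}$ be an ensemble of $M$ decision trees over an input space $\mathcal{X}$, with $L^m$ the set of leaves of tree $T^m$ and $\nu^m_j$ the value of leaf $l^m_j$, and let $\mathcal{C}:\mathcal{X}\to\{\mathrm{true},\mathrm{false}\}$ be a constraint such that $\mathcal{C}(\bm{x})$ holds for at least one $\bm{x}\in\mathcal{X}$. Consider the search space $S$ whose initial state is $[\,]$ and in which a state $s=[l^1_{i_1},\ldots,l^m_{i_m}]$ at depth $m<M$ has children $$C(s) = \{[l^1_{i_1},\ldots,l^m_{i_m}, l^{m+1}] \mid l^{m+1} \in L^{m+1},\ \mathrm{box}(l^1_{i_1},\ldots,l^m_{i_m},l^{m+1}) \neq \emptyset\},$$ and where only states $s$ accepted by $\mathcal{C}_s$ are retained, with $\mathcal{C}_s(s)=\mathrm{true}$ iff there exists $\bm{x}\in\mathrm{box}(s)$ with $\mathcal{C}(\bm{x})$. For $s=[l^1_{i_1},\ldots,l^m_{i_m}]$ define $$g(s)=\sum_{m'=1}^m \nu^{m'}_{i_{m'}},\qquad h(s)=\sum_{m'=m+1}^M h_{m'}(s),\qquad h_{m'}(s)=\max\{\nu^{m'}_j \mid l^{m'}_j\in L^{m'},\ \mathrm{box}(l^1_{i_1},\ldots,l^m_{i_m},l^{m'}_j)\neq\emptyset\},$$ and $f(s)=g(s)+h(s)$. Run best-first (A* ) search: maintain an OPEN list initialized to $\{[\,]\}$; repeatedly remove a state of maximal $f$-value from OPEN; if it has depth $M$, return it; otherwise add all its children in $C(s)$ that are accepted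 by $\mathcal{C}_s$ to OPEN. Then the search returns a state $s^*$ at depth $M$ which is an output configuration (a max-clique in $\bm{G}$) with $g(s^* ) = \max_{\bm{x}\in\mathcal{X},\ \mathcal{C}(\bm{x})} \bm{T}(\bm{x})$, i.e. it solves the optimization problem $\max_{\bm{x}\in\mathcal{X}} \bm{T}(\bm{x})$ subject to $\mathcal{C}(\bm{x})$.
   Context: Each tree $T^m$ is a binary tree whose internal nodes carry axis-aligned split conditions on the features of an input $\bm{x}\in\mathcal{X}$, and whose leaves carry real values. An input is evaluated by a tree by following split conditions from the root to a unique leaf; the ensemble output $\bm{T}(\bm{x})$ is the sum over trees of the values of the leaves reached by $\bm{x}$. For a leaf $l$, $\mathrm{box}(l)\subseteq\mathcal{X}$ is the set of inputs reaching $l$ (an axis-aligned box); for a collection of leaves (or a search state, viewed as its set of leaves), $\mathrm{box}$ is the intersection of the individual boxes, and $\mathrm{box}([\,])=\mathcal{X}$. An output configuration is a set of $M$ leaves, one per tree, whose boxes have nonempty common intersection. The graph $\bm{G}$ has all leaves as vertices with an edge between leaves of different trees whose boxes intersect; output configurations are exactly the max-cliques of $\bm{G}$ containing one leaf of each tree. For a state at depth $M$, $h=0$. *)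

theory Defs
  imports Complex_Main
begin

text \<open>An internal node Node j t l r carries the axis-aligned split condition  x j <= t :
  inputs satisfying it go to the left subtree l, the others to the right subtree r.\<close>
datatype 'f dtree = Leaf real | Node 'f real "'f dtree" "'f dtree"

fun tree_eval :: "'f dtree \<Rightarrow> ('f \<Rightarrow> real) \<Rightarrow> real" where
  "tree_eval (Leaf v) x = v"
| "tree_eval (Node j t l r) x = (if x j \<le> t then tree_eval l x else tree_eval r x)"

definition ens_eval :: "'f dtree list \<Rightarrow> ('f \<Rightarrow> real) \<Rightarrow> real" where
  "ens_eval Ts x = (\<Sum>m<length Ts. tree_eval (Ts ! m) x)"

text \<open>Leaves of a tree are identified by their path from the root
  (False = left branch, True = right branch).\<close>
fun leaves :: "'f dtree \<Rightarrow> bool list set" where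
  "leaves (Leaf v) = {[]}"
| "leaves (Node j t l r) = Cons False ` leaves l \<union> Cons True ` leaves r"

fun leaf_value :: "'f dtree \<Rightarrow> bool list \<Rightarrow> real" where
  "leaf_value (Leaf v) [] = v"
| "leaf_value (Node j t l r) (False # p) = leaf_value l p"
| "leaf_value (Node j t l r) (True # p) = leaf_value r p"
| "leaf_value _ _ = 0"

fun path_box :: "'f dtree \<Rightarrow> bool list \<Rightarrow> ('f \<Rightarrow> real) set" where
  "path_box (Leaf v) [] = UNIV"
| "path_box (Node j t l r) (False # p) = {x. x j \<le> t} \<inter> path_box l p"
| "path_box (Node j t l r) (True # p) = {x. \<not> x j \<le> t} \<inter> path_box r p"
| "path_box _ _ = {}"

definition leaf_box :: "('f \<Rightarrow> real) set \<Rightarrow> 'f dtree \<Rightarrow> bool list \<Rightarrow> ('f \<Rightarrow> real) set" where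
  "leaf_box X T l = X \<inter> path_box T l"

text \<open>A search state  [l^1,...,l^m]  is a list whose m-th entry (0-based) is a leaf of tree m.
  box of a state = intersection of the boxes of its leaves; box([]) = X.\<close>
definition state_box :: "('f \<Rightarrow> real) set \<Rightarrow> 'f dtree list \<Rightarrow> bool list list \<Rightarrow> ('f \<Rightarrow> real) set" where
  "state_box X Ts s = X \<inter> (\<Inter>m<length s. leaf_box X (Ts ! m) (s ! m))"

definition children :: "('f \<Rightarrow> real) set \<Rightarrow> 'f dtree list \<Rightarrow> bool list list \<Rightarrow> bool list list set" where
  "children X Ts s = {s @ [l] | l. l \<in> leaves (Ts ! length s) \<and> state_box X Ts (s @ [l]) \<noteq> {}}"

definition Cs :: "('f \<Rightarrow> real) set \<Rightarrow> (('f \<Rightarrow> real) \<Rightarrow> bool) \<Rightarrow> 'f dtree list \<Rightarrow> bool list list \<Rightarrow> bool" where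
  "Cs X C Ts s \<longleftrightarrow> (\<exists>x\<in>state_box X Ts s. C x)"

definition g_val :: "'f dtree list \<Rightarrow> bool list list \<Rightarrow> real" where
  "g_val Ts s = (\<Sum>m<length s. leaf_value (Ts ! m) (s ! m))"

definition h_tree :: "('f \<Rightarrow> real) set \<Rightarrow> 'f dtree list \<Rightarrow> bool list list \<Rightarrow> nat \<Rightarrow> real" where
  "h_tree X Ts s m' = Max {leaf_value (Ts ! m') l | l.
      l \<in> leaves (Ts ! m') \<and> state_box X Ts s \<inter> leaf_box X (Ts ! m') l \<noteq> {}}"

definition h_val :: "('f \<Rightarrow> real) set \<Rightarrow> 'f dtree list \<Rightarrow> bool list list \<Rightarrow> real" where
  "h_val X Ts s = (\<Sum>m'\<in>{length s..<length Ts}. h_tree X Ts s m')"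

definition f_val :: "('f \<Rightarrow> real) set \<Rightarrow> 'f dtree list \<Rightarrow> bool list list \<Rightarrow> real" where
  "f_val X Ts s = g_val Ts s + h_val X Ts s"

definition output_config :: "('f \<Rightarrow> real) set \<Rightarrow> 'f dtree list \<Rightarrow> bool list list \<Rightarrow> bool" where
  "output_config X Ts s \<longleftrightarrow> length s = length Ts \<and> (\<forall>m<length Ts. s ! m \<in> leaves (Ts ! m))
     \<and> state_box X Ts s \<noteq> {}"

datatype 'a search_cfg = Open "'a set" | Returned 'a

text \<open>One iteration: remove some state of maximal f-value from OPEN (ties broken arbitrarily);
  return it if it has depth M, otherwise add its children accepted by C_s.\<close>
inductive astar_step :: "('f \<Rightarrow> real) set \<Rightarrow> (('f \<Rightarrow> real) \<Rightarrow> bool) \<Rightarrow> 'f dtree list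
    \<Rightarrow> bool list list search_cfg \<Rightarrow> bool list list search_cfg \<Rightarrow> bool"
  for X C Ts where
  ret: "\<lbrakk> s \<in> OP; \<forall>s'\<in>OP. f_val X Ts s' \<le> f_val X Ts s; length s = length Ts \<rbrakk>
        \<Longrightarrow> astar_step X C Ts (Open OP) (Returned s)"
| expand: "\<lbrakk> s \<in> OP; \<forall>s'\<in>OP. f_val X Ts s' \<le> f_val X Ts s; length s < length Ts \<rbrakk>
        \<Longrightarrow> astar_step X C Ts (Open OP)
              (Open ((OP - {s}) \<union> {c \<in> children X Ts s. Cs X C Ts c}))"

end

theory Submission imports Defs "HOL-Library.Multiset" begin

fun tpath :: "'f dtree \<Rightarrow> ('f \<Rightarrow> real) \<Rightarrow> bool list" where
  "tpath (Leaf v) x = []"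
| "tpath (Node j t l r) x = (if x j \<le> t then False # tpath l x else True # tpath r x)"

lemma tpath_leaves: "tpath T x \<in> leaves T"
  by (induction T) auto

lemma tpath_box: "x \<in> path_box T (tpath T x)"
  by (induction T) auto

lemma tpath_unique: "p \<in> leaves T \<Longrightarrow> x \<in> path_box T p \<Longrightarrow> p = tpath T x"
  by (induction T arbitrary: p) auto

lemma tpath_eval: "tree_eval T x = leaf_value T (tpath T x)"
  by (induction T) auto

lemma finite_leaves: "finite (leaves T)"
  by (induction T) auto

definition valid :: "'f dtree list \<Rightarrow> bool list list \<Rightarrow> bool" where
  "valid Ts s \<longleftrightarrow> (\<forall>m<length s. s ! m \<in> leaves (Ts ! m))"

lemma in_state_box: "x \<in> state_box X Ts s \<longleftrightarrow> x \<in> X \<and> (\<forall>m<length s. x \<in> path_box (Ts ! m) (s ! m))"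
  unfolding state_box_def leaf_box_def by auto

lemma in_state_box_snoc: "x \<in> state_box X Ts (s @ [l]) \<longleftrightarrow> x \<in> state_box X Ts s \<and> x \<in> path_box (Ts ! length s) l"
  unfolding in_state_box by (auto simp: nth_append less_Suc_eq)

lemma g_val_eval:
  assumes "valid Ts s" "x \<in> state_box X Ts s"
  shows "g_val Ts s = (\<Sum>m<length s. tree_eval (Ts ! m) x)"
  unfolding g_val_def
proof (rule sum.cong)
  fix m assume "m \<in> {..<length s}"
  then have "s ! m = tpath (Ts ! m) x"
    using assms by (auto simp: valid_def in_state_box intro: tpath_unique)
  then show "leaf_value (Ts ! m) (s ! m) = tree_eval (Ts ! m) x" by (simp add: tpath_eval)
qed simp

lemma h_tree_ge:
  assumes "x \<in> state_box X Ts s"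
  shows "tree_eval (Ts ! m) x \<le> h_tree X Ts s m"
  unfolding h_tree_def
proof (rule Max_ge)
  have "{leaf_value (Ts ! m) l | l. l \<in> leaves (Ts ! m) \<and> state_box X Ts s \<inter> leaf_box X (Ts ! m) l \<noteq> {}}
     \<subseteq> leaf_value (Ts ! m) ` leaves (Ts ! m)" by auto
  then show "finite {leaf_value (Ts ! m) l | l. l \<in> leaves (Ts ! m) \<and> state_box X Ts s \<inter> leaf_box X (Ts ! m) l \<noteq> {}}"
    using finite_leaves finite_subset by blast
  have "x \<in> state_box X Ts s \<inter> leaf_box X (Ts ! m) (tpath (Ts ! m) x)"
    using assms tpath_box by (auto simp: leaf_box_def in_state_box)
  then show "tree_eval (Ts ! m) x \<in> {leaf_value (Ts ! m) l | l. l \<in> leaves (Ts ! m) \<and> state_box X Ts s \<inter> leaf_box X (Ts ! m) l \<noteq> {}}"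
    using tpath_leaves tpath_eval by blast
qed

lemma admissible:
  assumes "valid Ts s" "length s \<le> length Ts" "x \<in> state_box X Ts s"
  shows "ens_eval Ts x \<le> f_val X Ts s"
proof -
  have "ens_eval Ts x = (\<Sum>m<length s. tree_eval (Ts ! m) x) + (\<Sum>m\<in>{length s..<length Ts}. tree_eval (Ts ! m) x)"
    unfolding ens_eval_def using assms(2)
    by (metis atLeast0LessThan le0 sum.atLeastLessThan_concat)
  also have "\<dots> \<le> g_val Ts s + h_val X Ts s"
    unfolding g_val_eval[OF assms(1,3)] h_val_def
    by (intro add_left_mono sum_mono h_tree_ge[OF assms(3)])
  finally show ?thesis by (simp add: f_val_def)
qed

lemma full_g:
  assumes "valid Ts s" "length s = length Ts" "x \<in> state_box X Ts s"
  shows "g_val Ts s = ens_eval Ts x" "f_val X Ts s = g_val Ts s"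
  using g_val_eval[OF assms(1,3)] assms(2) by (auto simp: ens_eval_def f_val_def h_val_def)


definition inv_cfg :: "('f \<Rightarrow> real) set \<Rightarrow> (('f \<Rightarrow> real) \<Rightarrow> bool) \<Rightarrow> 'f dtree list \<Rightarrow> ('f \<Rightarrow> real)
    \<Rightarrow> real \<Rightarrow> bool list list search_cfg \<Rightarrow> bool" where
  "inv_cfg X C Ts xs opt c = (case c of
     Open OP \<Rightarrow> finite OP \<and> (\<forall>s\<in>OP. length s \<le> length Ts \<and> valid Ts s \<and> Cs X C Ts s)
                \<and> (\<exists>t\<in>OP. xs \<in> state_box X Ts t)
   | Returned s \<Rightarrow> output_config X Ts s \<and> g_val Ts s = opt)"

lemma finite_children: "finite (children X Ts s)"
proof -
  have "children X Ts s \<subseteq> (\<lambda>l. s @ [l]) ` leaves (Ts ! length s)"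
    unfolding children_def by auto
  then show ?thesis using finite_leaves finite_subset by blast
qed

lemma children_valid:
  assumes "valid Ts s" "c \<in> children X Ts s"
  shows "valid Ts c" "length c = Suc (length s)"
  using assms unfolding children_def valid_def by (auto simp: nth_append less_Suc_eq)

lemma opt_set_finite: "finite {ens_eval Ts x | x. x \<in> X \<and> C x}"
proof -
  let ?A = "\<Union>m<length Ts. leaves (Ts ! m)"
  have fA: "finite ?A" using finite_leaves by blast
  have "{ens_eval Ts x | x. x \<in> X \<and> C x} \<subseteq> g_val Ts ` {s. set s \<subseteq> ?A \<and> length s = length Ts}"
  proof
    fix y assume "y \<in> {ens_eval Ts x | x. x \<in> X \<and> C x}"
    then obtain x where x: "x \<in> X" "y = ens_eval Ts x" by auto
    let ?s = "map (\<lambda>m. tpath (Ts ! m) x) [0..<length Ts]"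
    have v: "valid Ts ?s" by (simp add: valid_def tpath_leaves)
    have b: "x \<in> state_box X Ts ?s" by (simp add: in_state_box x tpath_box)
    have "set ?s \<subseteq> ?A"
    proof
      fix p assume "p \<in> set ?s"
      then obtain m where "m < length Ts" "p = tpath (Ts ! m) x" by auto
      then show "p \<in> ?A" using tpath_leaves by blast
    qed
    moreover have "y = g_val Ts ?s" using full_g(1)[OF v _ b] x by simp
    ultimately show "y \<in> g_val Ts ` {s. set s \<subseteq> ?A \<and> length s = length Ts}" by auto
  qed
  then show ?thesis using finite_lists_length_eq[OF fA] finite_subset by blast
qed

lemma step_inv:
  assumes opt: "opt = Max {ens_eval Ts x | x. x \<in> X \<and> C x}" and xs: "xs \<in> X" "C xs" "ens_eval Ts xs = opt"
  and st: "astar_step X C Ts c c'" and inv: "inv_cfg X C Ts xs opt c"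
  shows "inv_cfg X C Ts xs opt c'"
  using st
proof cases
  case (ret s OP)
  from inv ret have fin: "finite OP" and all: "\<forall>s\<in>OP. length s \<le> length Ts \<and> valid Ts s \<and> Cs X C Ts s"
    and ex: "\<exists>t\<in>OP. xs \<in> state_box X Ts t" by (auto simp: inv_cfg_def)
  from all ret have vs: "valid Ts s" and cs: "Cs X C Ts s" by auto
  then obtain x where x: "x \<in> state_box X Ts s" "C x" by (auto simp: Cs_def)
  then have xX: "x \<in> X" by (simp add: in_state_box)
  have oc: "output_config X Ts s" using ret vs x by (auto simp: output_config_def valid_def)
  have "g_val Ts s = ens_eval Ts x" using full_g(1)[OF vs _ x(1)] ret by simp
  also have "\<dots> \<le> opt" unfolding opt using opt_set_finite x xX by (intro Max_ge) auto
  finally have le: "g_val Ts s \<le> opt" .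
  from ex obtain t where t: "t \<in> OP" "xs \<in> state_box X Ts t" by blast
  have "opt \<le> f_val X Ts t" using admissible[of Ts t xs X] all t xs by auto
  also have "\<dots> \<le> f_val X Ts s" using ret t by auto
  also have "\<dots> = g_val Ts s" using full_g(2)[OF vs _ x(1)] ret by simp
  finally show ?thesis using le oc ret by (simp add: inv_cfg_def)
next
  case (expand s OP)
  from inv expand have fin: "finite OP" and all: "\<forall>s\<in>OP. length s \<le> length Ts \<and> valid Ts s \<and> Cs X C Ts s"
    and ex: "\<exists>t\<in>OP. xs \<in> state_box X Ts t" by (auto simp: inv_cfg_def)
  from all expand have vs: "valid Ts s" by auto
  have sl: "length s < length Ts" using expand by blast
  let ?A = "{c \<in> children X Ts s. Cs X C Ts c}"
  have f1: "finite (OP - {s} \<union> ?A)" using fin finite_children[of X Ts s] by auto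
  have f2: "\<forall>c\<in>OP - {s} \<union> ?A. length c \<le> length Ts \<and> valid Ts c \<and> Cs X C Ts c"
    
  proof
    fix d assume "d \<in> OP - {s} \<union> ?A"
    then consider "d \<in> OP" | "d \<in> children X Ts s" "Cs X C Ts d" by blast
    then show "length d \<le> length Ts \<and> valid Ts d \<and> Cs X C Ts d"
    proof cases
      case 1 then show ?thesis using all by blast
    next
      case 2 then show ?thesis using children_valid[OF vs 2(1)] sl by simp
    qed
  qed
  have f3: "\<exists>t\<in>OP - {s} \<union> ?A. xs \<in> state_box X Ts t"
  proof (cases "xs \<in> state_box X Ts s")
    case True
    let ?c = "s @ [tpath (Ts ! length s) xs]"
    have b: "xs \<in> state_box X Ts ?c" using True by (simp add: in_state_box_snoc tpath_box)
    have "?c \<in> children X Ts s" unfolding children_def using tpath_leaves b by blast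
    moreover have "Cs X C Ts ?c" using b xs by (auto simp: Cs_def)
    ultimately show ?thesis using b by blast
  next
    case False
    then show ?thesis using ex by blast
  qed
  have e: "c' = Open (OP - {s} \<union> ?A)" using expand by blast
  show ?thesis unfolding e inv_cfg_def search_cfg.case using f1 f2 f3 by blast
qed

lemma reach_inv:
  assumes opt: "opt = Max {ens_eval Ts x | x. x \<in> X \<and> C x}" and xs: "xs \<in> X" "C xs" "ens_eval Ts xs = opt"
  and r: "(astar_step X C Ts)\<^sup>*\<^sup>* (Open {[]}) c"
  shows "inv_cfg X C Ts xs opt c"
  using r
proof induction
  case base
  have "xs \<in> state_box X Ts []" using xs by (simp add: in_state_box)
  then show ?case using xs by (auto simp: inv_cfg_def valid_def Cs_def)
next
  case (step y z)
  then show ?case using step_inv[OF opt xs] by blast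
qed

definition mu :: "nat \<Rightarrow> bool list list search_cfg \<Rightarrow> nat multiset" where
  "mu M c = (case c of Open OP \<Rightarrow> image_mset (\<lambda>s. M - length s) (mset_set OP) | Returned s \<Rightarrow> {#})"

lemma step_mu:
  assumes st: "astar_step X C Ts (Open OP) (Open OP')" and fin: "finite OP"
    and all: "\<forall>s\<in>OP. valid Ts s"
  shows "(mu (length Ts) (Open OP'), mu (length Ts) (Open OP)) \<in> mult less_than"
proof -
  from st obtain s where sOP: "s \<in> OP" and sl: "length s < length Ts"
    and e0: "OP' = (OP - {s}) \<union> {c \<in> children X Ts s. Cs X C Ts c}"
    by cases auto
  let ?A = "{c \<in> children X Ts s. Cs X C Ts c}"
  let ?B = "?A - (OP - {s})"
  let ?f = "\<lambda>s. length Ts - length s"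
  have vs: "valid Ts s" using all sOP by auto
  have fB: "finite ?B" using finite_children[of X Ts s] by auto
  have e1: "OP' = (OP - {s}) \<union> ?B" using e0 by auto
  have "mset_set OP' = mset_set (OP - {s}) + mset_set ?B"
    unfolding e1 using fin fB by (intro mset_set_Union) auto
  then have m1: "mu (length Ts) (Open OP') = image_mset ?f (mset_set (OP - {s})) + image_mset ?f (mset_set ?B)"
    by (simp add: mu_def)
  have "mset_set OP = add_mset s (mset_set (OP - {s}))"
    using fin sOP by (rule mset_set.remove)
  then have m2: "mu (length Ts) (Open OP) = image_mset ?f (mset_set (OP - {s})) + {#?f s#}"
    by (simp add: mu_def)
  have "\<forall>k\<in>#image_mset ?f (mset_set ?B). \<exists>j\<in>#{#?f s#}. (k, j) \<in> less_than"
  proof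
    fix k assume "k \<in># image_mset ?f (mset_set ?B)"
    then obtain c where c: "c \<in> ?B" "k = ?f c" using fB by auto
    then have "length c = Suc (length s)" using children_valid(2)[OF vs] by blast
    then have "(k, ?f s) \<in> less_than" using c sl by auto
    then show "\<exists>j\<in>#{#?f s#}. (k, j) \<in> less_than" by simp
  qed
  then show ?thesis unfolding m1 m2 by (intro one_step_implies_mult) auto
qed

lemma step_from_open: "astar_step X C Ts c c' \<Longrightarrow> \<exists>OP. c = Open OP"
  by (cases rule: astar_step.cases) auto

theorem theorem2:
  fixes X :: "('f \<Rightarrow> real) set" and C :: "('f \<Rightarrow> real) \<Rightarrow> bool" and Ts :: "'f dtree list"
  assumes "\<exists>x\<in>X. C x"
  shows "(\<forall>c. (astar_step X C Ts)\<^sup>*\<^sup>* (Open {[]}) c \<longrightarrow>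
            (\<exists>c'. astar_step X C Ts c c') \<or> (\<exists>s. c = Returned s))
       \<and> \<not> (\<exists>r. r 0 = Open {[]} \<and> (\<forall>i. astar_step X C Ts (r i) (r (Suc i))))
       \<and> (\<forall>s. (astar_step X C Ts)\<^sup>*\<^sup>* (Open {[]}) (Returned s) \<longrightarrow>
            output_config X Ts s \<and>
            g_val Ts s = Max {ens_eval Ts x | x. x \<in> X \<and> C x})"
proof -
  define opt where "opt = Max {ens_eval Ts x | x. x \<in> X \<and> C x}"
  have "opt \<in> {ens_eval Ts x | x. x \<in> X \<and> C x}"
    unfolding opt_def using opt_set_finite assms by (intro Max_in) auto
  then obtain xs where xs: "xs \<in> X" "C xs" "ens_eval Ts xs = opt" by auto
  note RI = reach_inv[OF opt_def xs]
  have P1: "\<forall>c. (astar_step X C Ts)\<^sup>*\<^sup>* (Open {[]}) c \<longrightarrow>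
            (\<exists>c'. astar_step X C Ts c c') \<or> (\<exists>s. c = Returned s)"
  proof (intro allI impI)
    fix c assume rc: "(astar_step X C Ts)\<^sup>*\<^sup>* (Open {[]}) c"
    show "(\<exists>c'. astar_step X C Ts c c') \<or> (\<exists>s. c = Returned s)"
    proof (cases c)
      case (Open OP)
      with RI[OF rc] have fin: "finite OP" and all: "\<forall>s\<in>OP. length s \<le> length Ts \<and> valid Ts s \<and> Cs X C Ts s"
        and ne: "OP \<noteq> {}" by (auto simp: inv_cfg_def)
      have "Max (f_val X Ts ` OP) \<in> f_val X Ts ` OP" using fin ne by (intro Max_in) auto
      then obtain s where s: "s \<in> OP" "f_val X Ts s = Max (f_val X Ts ` OP)" by auto
      have mx: "\<forall>s'\<in>OP. f_val X Ts s' \<le> f_val X Ts s" using s fin by auto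
      have "length s \<le> length Ts" using all s by auto
      then consider "length s = length Ts" | "length s < length Ts" by linarith
      then show ?thesis
      proof cases
        case 1 then show ?thesis using astar_step.ret[OF s(1) mx] Open by blast
      next
        case 2 then show ?thesis using astar_step.expand[OF s(1) mx] Open by blast
      qed
    qed simp
  qed
  have P2: "\<not> (\<exists>r. r 0 = Open {[]} \<and> (\<forall>i. astar_step X C Ts (r i) (r (Suc i))))"
  proof
    assume "\<exists>r. r 0 = Open {[]} \<and> (\<forall>i. astar_step X C Ts (r i) (r (Suc i)))"
    then obtain r where r0: "r 0 = Open {[]}" and rs: "\<And>i. astar_step X C Ts (r i) (r (Suc i))" by blast
    have reach: "(astar_step X C Ts)\<^sup>*\<^sup>* (Open {[]}) (r i)" for i
    proof (induction i)
      case 0 then show ?case using r0 by simp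
    next
      case (Suc i) then show ?case using rs[of i] by (rule rtranclp.rtrancl_into_rtrancl)
    qed
    have dec: "(mu (length Ts) (r (Suc i)), mu (length Ts) (r i)) \<in> mult less_than" for i
    proof -
      obtain OP where o1: "r i = Open OP" using step_from_open[OF rs[of i]] by blast
      obtain OP' where o2: "r (Suc i) = Open OP'" using step_from_open[OF rs[of "Suc i"]] by blast
      have "finite OP" "\<forall>s\<in>OP. valid Ts s" using RI[OF reach[of i]] o1 by (auto simp: inv_cfg_def)
      then show ?thesis using step_mu[of X C Ts OP OP'] rs[of i] o1 o2 by simp
    qed
    have "wf (mult less_than)" by (intro wf_mult wf_less_than)
    moreover have "\<exists>f. \<forall>i. (f (Suc i), f i) \<in> mult less_than"
      using dec by (intro exI[of _ "\<lambda>i. mu (length Ts) (r i)"]) simp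
    ultimately show False unfolding wf_iff_no_infinite_down_chain by blast
  qed
  have P3: "\<forall>s. (astar_step X C Ts)\<^sup>*\<^sup>* (Open {[]}) (Returned s) \<longrightarrow>
            output_config X Ts s \<and> g_val Ts s = Max {ens_eval Ts x | x. x \<in> X \<and> C x}"
  proof (intro allI impI)
    fix s assume "(astar_step X C Ts)\<^sup>*\<^sup>* (Open {[]}) (Returned s)"
    from RI[OF this] show "output_config X Ts s \<and> g_val Ts s = Max {ens_eval Ts x | x. x \<in> X \<and> C x}"
      unfolding inv_cfg_def opt_def by simp
  qed
  show ?thesis using P1 P2 P3 by blast
qed

end
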